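(* Let $a\ge 0$ and let $h$ be as defined in the context. Then for every $x\in[a-1,a+1]$, \[\log h(x)=\log h(a)+\sum_{k=1}^\infty\frac{(-1)^{k-1}}{k}\left(\sum_{n=2}^\infty\frac{u_n}{(n+a)^k}\right)(x-a)^k.\]
   Context: Let $u_n=(-1)^{s_2(n)}$, where $s_2(n)$ is the sum of the binary digits of the non-negative integer $n$ (Thue–Morse sequence with values $\pm1$). For real $x>-2$ define $h(x)=\prod_{n=1}^\infty\left(\frac{2n+x}{2n+1+x}\right)^{u_n}$ (limit of partial products; it converges and is positive). *)

theory Defs
  imports "HOL-Analysis.Analysis"
begin

fun s2 :: "nat \<Rightarrow> nat" where
  "s2 n = (if n = 0 then 0 else n mod 2 + s2 (n div 2))"

definition tm :: "nat \<Rightarrow> real" where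
  "tm n = (-1) ^ s2 n"

definition h :: "real \<Rightarrow> real" where
  "h x = lim (\<lambda>N. \<Prod>n\<in>{1..N}. ((2 * real n + x) / (2 * real n + 1 + x)) powr tm n)"

end

theory Submission
  imports Defs
begin


declare s2.simps[simp del]

lemma s2_even: "s2 (2*m) = s2 m"
proof (cases "m = 0")
  case False then show ?thesis by (subst s2.simps[of "2*m"]) simp
qed simp

lemma s2_odd: "s2 (2*m+1) = s2 m + 1"
  by (subst s2.simps[of "2*m+1"]) simp

lemma tm_even: "tm (2*m) = tm m" by (simp add: tm_def s2_even)
lemma tm_odd: "tm (2*m+1) = - tm m" unfolding tm_def s2_odd by simp
lemma abs_tm: "\<bar>tm n\<bar> = 1" by (simp add: tm_def)

lemma tm_pair_sum: "(\<Sum>n<2*M. tm n * f n) = (\<Sum>m<M. tm m * (f (2*m) - f (2*m+1)))"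
proof (induction M)
  case (Suc M)
  have "2 * Suc M = Suc (Suc (2*M))" by simp
  then show ?case using Suc tm_even[of M] tm_odd[of M] by (simp add: algebra_simps)
qed simp

lemma tm_pair_sum2: "(\<Sum>k<N. tm (Suc k) * (f (2*Suc k) - f (2*Suc k+1))) = (\<Sum>m<2*N. tm (m+2) * f (m+2))"
proof (induction N)
  case (Suc N)
  have e: "2 * Suc N = Suc (Suc (2*N))" by simp
  have "tm (2*N+2) = tm (Suc N)" using tm_even[of "Suc N"] by simp
  moreover have "tm (Suc (2*N) + 2) = - tm (Suc N)" using tm_odd[of "Suc N"] by simp
  ultimately show ?case using Suc by (simp add: e algebra_simps)
qed simp

lemma limseq_even_odd':
  assumes "(\<lambda>n. f (2 * n)) \<longlonglongrightarrow> (l :: real)"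
      and "(\<lambda>n. f (2 * n + 1)) \<longlonglongrightarrow> l"
  shows "f \<longlonglongrightarrow> l"
proof (rule LIMSEQ_I)
  fix r :: real assume r: "r > 0"
  obtain N1 where N1: "\<And>n. n \<ge> N1 \<Longrightarrow> norm (f (2*n) - l) < r" using LIMSEQ_D[OF assms(1) r] by blast
  obtain N2 where N2: "\<And>n. n \<ge> N2 \<Longrightarrow> norm (f (2*n+1) - l) < r" using LIMSEQ_D[OF assms(2) r] by blast
  show "\<exists>no. \<forall>n\<ge>no. norm (f n - l) < r"
  proof (intro exI allI impI)
    fix n assume n: "2*N1 + 2*N2 + 1 \<le> n"
    show "norm (f n - l) < r"
    proof (cases "even n")
      case True then obtain b where b: "n = 2*b" by (auto elim: evenE)
      with n N1[of b] show ?thesis by simp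
    next
      case False then obtain b where b: "n = 2*b+1" by (auto elim: oddE)
      with n N2[of b] show ?thesis by simp
    qed
  qed
qed

lemma tm_summable:
  fixes c :: "nat \<Rightarrow> real"
  assumes dec: "decseq c" and lim: "c \<longlonglongrightarrow> 0"
  shows "summable (\<lambda>n. tm n * c n)"
proof -
  have c0: "c n \<ge> 0" for n using decseq_ge[OF dec lim] .
  have cm: "c n \<le> c m" if "m \<le> n" for m n using dec that by (simp add: decseq_def)
  define d where "d m = c (2*m) - c (2*m+1)" for m
  have l2: "(\<lambda>m. c (2*m)) \<longlonglongrightarrow> 0"
    by (rule LIMSEQ_subseq_LIMSEQ[OF lim, unfolded o_def]) (simp add: strict_mono_def)
  have "(\<lambda>m. (- c (2*Suc m)) - (- c (2*m))) sums (0 - (- c (2*0)))"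
    by (rule telescope_sums) (use tendsto_minus[OF l2] in simp)
  hence gs: "summable (\<lambda>m. c (2*m) - c (2*Suc m))" by (simp add: sums_iff)
  have "summable (\<lambda>m. tm m * d m)"
  proof (rule summable_comparison_test'[OF gs])
    fix m
    show "norm (tm m * d m) \<le> c (2*m) - c (2*Suc m)"
      using cm[of "2*m" "2*m+1"] cm[of "2*m+1" "2*Suc m"] by (simp add: abs_mult abs_tm d_def)
  qed
  then obtain L where L: "(\<lambda>m. tm m * d m) sums L" by (auto simp: summable_def)
  have ev: "(\<lambda>M. \<Sum>n<2*M. tm n * c n) \<longlonglongrightarrow> L"
    using L unfolding sums_def by (simp add: tm_pair_sum d_def)
  have z: "(\<lambda>M. tm (2*M) * c (2*M)) \<longlonglongrightarrow> 0"
  proof (rule tendsto_rabs_zero_cancel)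
    show "(\<lambda>M. \<bar>tm (2*M) * c (2*M)\<bar>) \<longlonglongrightarrow> 0"
      using tendsto_rabs_zero[OF l2] by (simp add: abs_mult abs_tm)
  qed
  have od: "(\<lambda>M. \<Sum>n<2*M+1. tm n * c n) \<longlonglongrightarrow> L"
    using tendsto_add[OF ev z] by simp
  have "(\<lambda>N. \<Sum>n<N. tm n * c n) \<longlonglongrightarrow> L"
    by (rule limseq_even_odd'[OF ev od])
  then show ?thesis by (auto simp: sums_def summable_def)
qed

lemma null_sandwich:
  fixes c :: "nat \<Rightarrow> real"
  assumes "\<And>n. 0 \<le> c n" "\<And>n. n \<ge> 1 \<Longrightarrow> c n \<le> 1 / real n"
  shows "c \<longlonglongrightarrow> 0"
proof (rule tendsto_sandwich[OF _ _ tendsto_const lim_inverse_n'])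
  show "\<forall>\<^sub>F n in sequentially. 0 \<le> c n" using assms(1) by simp
  show "\<forall>\<^sub>F n in sequentially. c n \<le> 1 / real n"
    using assms(2) by (auto simp: eventually_at_top_linorder intro!: exI[of _ 1])
qed




definition SN :: "real \<Rightarrow> nat \<Rightarrow> real" where
  "SN y N = (\<Sum>n\<in>{1..N}. tm n * (ln (2 * real n + y) - ln (2 * real n + 1 + y)))"

lemma prod_exp_SN:
  assumes y: "y \<ge> -1"
  shows "(\<Prod>n\<in>{1..N}. ((2 * real n + y) / (2 * real n + 1 + y)) powr tm n) = exp (SN y N)"
proof -
  have "(\<Prod>n\<in>{1..N}. ((2 * real n + y) / (2 * real n + 1 + y)) powr tm n)
      = (\<Prod>n\<in>{1..N}. exp (tm n * (ln (2 * real n + y) - ln (2 * real n + 1 + y))))"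
  proof (rule prod.cong)
    fix n assume "n \<in> {1..N}"
    then have p1: "2 * real n + y > 0" and p2: "2 * real n + 1 + y > 0" using y by auto
    then show "((2 * real n + y) / (2 * real n + 1 + y)) powr tm n = exp (tm n * (ln (2 * real n + y) - ln (2 * real n + 1 + y)))"
      by (simp add: powr_def ln_div)
  qed simp
  also have "\<dots> = exp (SN y N)" unfolding SN_def by (simp add: exp_sum)
  finally show ?thesis .
qed

lemma SN_conv:
  assumes y: "y \<ge> -1"
  shows "\<exists>S. (\<lambda>N. SN y N) \<longlonglongrightarrow> S \<and> h y = exp S"
proof -
  define u where "u n = 2 * real (max n 1) + y" for n
  define c where "c n = ln (1 + 1 / u n)" for n
  have u1: "u n \<ge> 1" for n using y by (simp add: u_def)
  have c0: "c n \<ge> 0" for n using u1[of n] by (simp add: c_def)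
  have dec: "decseq c"
  proof (rule decseq_SucI)
    fix n
    have "u n \<le> u (Suc n)" by (simp add: u_def)
    then have "1 / u (Suc n) \<le> 1 / u n" using u1[of n] by (simp add: frac_le)
    then show "c (Suc n) \<le> c n" unfolding c_def using u1[of n] u1[of "Suc n"]
      by (subst ln_le_cancel_iff) (auto simp: add_pos_nonneg)
  qed
  have lim: "c \<longlonglongrightarrow> 0"
  proof (rule null_sandwich[OF c0])
    fix n :: nat assume n: "n \<ge> 1"
    have "c n \<le> 1 / u n" unfolding c_def using u1[of n] by (intro ln_add_one_self_le_self) simp
    also have "\<dots> \<le> 1 / real n" using n y u1[of n] by (intro divide_left_mono) (auto simp: u_def)
    finally show "c n \<le> 1 / real n" .
  qed
  have "summable (\<lambda>n. tm n * c n)" by (rule tm_summable[OF dec lim])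
  then have sm: "summable (\<lambda>k. tm (Suc k) * c (Suc k))" by (subst summable_Suc_iff)
  have eq: "SN y N = - (\<Sum>k<N. tm (Suc k) * c (Suc k))" for N
  proof -
    have "SN y N = (\<Sum>k<N. tm (Suc k) * (ln (2 * real (Suc k) + y) - ln (2 * real (Suc k) + 1 + y)))"
      unfolding SN_def by (simp add: sum.atLeast1_atMost_eq del: of_nat_Suc)
    also have "\<dots> = (\<Sum>k<N. - (tm (Suc k) * c (Suc k)))"
    proof (rule sum.cong)
      fix k
      have p: "2 * real (Suc k) + y > 0" using y by simp
      have "1 + 1 / u (Suc k) = (2 * real (Suc k) + 1 + y) / (2 * real (Suc k) + y)"
        using p by (simp add: u_def field_simps del: of_nat_Suc)
      then have cc: "c (Suc k) = ln (2 * real (Suc k) + 1 + y) - ln (2 * real (Suc k) + y)"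
        using p by (simp add: c_def ln_div del: of_nat_Suc)
      show "tm (Suc k) * (ln (2 * real (Suc k) + y) - ln (2 * real (Suc k) + 1 + y)) = - (tm (Suc k) * c (Suc k))"
        unfolding cc by (simp add: algebra_simps)
    qed simp
    finally show ?thesis by (simp add: sum_negf)
  qed
  define S where "S = - (\<Sum>k. tm (Suc k) * c (Suc k))"
  have L: "(\<lambda>N. SN y N) \<longlonglongrightarrow> S"
    unfolding eq S_def by (intro tendsto_minus summable_LIMSEQ sm)
  have "(\<lambda>N. \<Prod>n\<in>{1..N}. ((2 * real n + y) / (2 * real n + 1 + y)) powr tm n) \<longlonglongrightarrow> exp S"
    unfolding prod_exp_SN[OF y] by (intro tendsto_exp L)
  then have "h y = exp S" unfolding h_def by (rule limI)
  with L show ?thesis by blast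
qed

lemma ln_h:
  assumes y: "y \<ge> -1"
  shows "(\<lambda>N. SN y N) \<longlonglongrightarrow> ln (h y)"
  using SN_conv[OF y] by auto

lemma SN_pair: "SN y N = (\<Sum>m<2*N. tm (m+2) * ln (real (m+2) + y))"
proof -
  have "SN y N = (\<Sum>k<N. tm (Suc k) * ((\<lambda>m. ln (real m + y)) (2*Suc k) - (\<lambda>m. ln (real m + y)) (2*Suc k+1)))"
    unfolding SN_def by (simp add: sum.atLeast1_atMost_eq algebra_simps)
  also have "\<dots> = (\<Sum>m<2*N. tm (m+2) * ln (real (m+2) + y))"
    by (rule tm_pair_sum2)
  finally show ?thesis .
qed




lemma A_summable:
  fixes a :: real
  assumes a: "a \<ge> 0" and k: "k \<ge> 1"
  shows "summable (\<lambda>n. tm (n + 2) / (real (n + 2) + a) ^ k)"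
proof -
  define b where "b n = real (max n 2) + a" for n
  define c where "c n = 1 / b n ^ k" for n
  have b2: "b n \<ge> 2" for n using a by (simp add: b_def)
  have dec: "decseq c"
  proof (rule decseq_SucI)
    fix n
    have "b n \<le> b (Suc n)" by (simp add: b_def)
    then have "b n ^ k \<le> b (Suc n) ^ k" using b2[of n] by (intro power_mono) auto
    then show "c (Suc n) \<le> c n" unfolding c_def using b2[of n] b2[of "Suc n"]
      by (intro divide_left_mono) (auto intro!: mult_pos_pos)
  qed
  have lim: "c \<longlonglongrightarrow> 0"
  proof (rule null_sandwich)
    fix n show "0 \<le> c n" using b2[of n] by (simp add: c_def)
  next
    fix n :: nat assume n: "n \<ge> 1"
    have "b n ^ 1 \<le> b n ^ k" using b2[of n] k by (intro power_increasing) auto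
    moreover have "real n \<le> b n" using a by (simp add: b_def)
    ultimately have "real n \<le> b n ^ k" by simp
    then show "c n \<le> 1 / real n" unfolding c_def using n by (intro divide_left_mono) auto
  qed
  have "summable (\<lambda>n. tm n * c n)" by (rule tm_summable[OF dec lim])
  then have "summable (\<lambda>n. tm (n+2) * c (n+2))" by (rule summable_ignore_initial_segment)
  moreover have "tm (n+2) * c (n+2) = tm (n + 2) / (real (n + 2) + a) ^ k" for n
    by (simp add: c_def b_def)
  ultimately show ?thesis by simp
qed

lemma ln1p_series:
  fixes y :: real
  assumes y: "\<bar>y\<bar> \<le> 1/2"
  shows "(\<lambda>j. (-1)^(Suc j) / real (Suc (Suc j)) * y^(Suc (Suc j))) sums (ln (1 + y) - y)"
proof -
  define g where "g n = (-1)^n * (1 / real (n + 1)) * y^(Suc n)" for n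
  have "ln (1 + y) = suminf g" unfolding g_def using y ln_series[of "1+y"] by auto
  moreover have "summable g"
  proof (rule summable_comparison_test'[OF summable_geometric[of "1/2::real"]])
    fix n
    have "norm (g n) = (1 / real (n+1)) * \<bar>y\<bar>^(Suc n)" by (simp add: g_def abs_mult power_abs)
    also have "\<dots> \<le> 1 * \<bar>y\<bar>^(Suc n)" by (intro mult_right_mono) auto
    also have "\<dots> \<le> (1/2)^(Suc n)" using y by (simp only: mult_1) (intro power_mono, auto)
    also have "\<dots> \<le> (1/2)^n" by simp
    finally show "norm (g n) \<le> (1/2)^n" .
  qed simp
  ultimately have "g sums ln (1 + y)" by (simp add: sums_iff)
  then have "(\<lambda>n. g (Suc n)) sums (ln (1 + y) - g 0)"
    by (subst sums_Suc_iff) simp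
  moreover have "g 0 = y" by (simp add: g_def)
  moreover have "g (Suc j) = (-1)^(Suc j) / real (Suc (Suc j)) * y^(Suc (Suc j))" for j
    by (simp add: g_def)
  ultimately show ?thesis by simp
qed




lemma fubini_part:
  fixes a t :: real
  assumes a: "a \<ge> 0" and t: "\<bar>t\<bar> \<le> 1"
  defines "Fc \<equiv> \<lambda>m j. ((-1)^(Suc j) / real (Suc (Suc j))) * (tm (m+2) / (real (m+2)+a)^(Suc (Suc j))) * t^(Suc (Suc j))"
  shows "\<exists>S. (\<lambda>m. tm (m+2) * (ln (1 + t/(real (m+2)+a)) - t/(real (m+2)+a))) sums S
           \<and> (\<lambda>j. \<Sum>m. Fc m j) sums S"
proof -
  define G where "G = (\<lambda>(m::nat,j::nat). (1/2::real)^j * (1/(real m + 2))^2)"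
  have bound: "norm (Fc m j) \<le> G (m,j)" for m j
  proof -
    define b where "b = real (m+2) + a"
    have b: "b \<ge> real m + 2" using a by (simp add: b_def)
    have "norm (Fc m j) = (1/real (Suc (Suc j))) * (1/b^(Suc (Suc j))) * \<bar>t\<bar>^(Suc (Suc j))"
      using b by (simp add: Fc_def b_def abs_mult power_abs abs_tm abs_divide)
    also have "\<dots> \<le> 1 * (1/b^(Suc (Suc j))) * 1"
      using b t by (intro mult_mono power_le_one) auto
    also have "\<dots> \<le> 1/(real m + 2)^(Suc (Suc j))"
    proof -
      have pm: "(real m + 2)^(Suc (Suc j)) \<le> b^(Suc (Suc j))" by (rule power_mono) (use b in auto)
      have "1/b^(Suc (Suc j)) \<le> 1/(real m + 2)^(Suc (Suc j))"
        by (rule divide_left_mono[OF pm]) (use b in \<open>auto intro!: mult_pos_pos zero_less_power\<close>)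
      then show ?thesis by (simp only: mult_1 mult_1_right)
    qed
    also have "\<dots> = (1/(real m + 2))^j * (1/(real m + 2))^2"
      by (simp only: power_one_over[symmetric] power_add[symmetric]) simp
    also have "\<dots> \<le> (1/2)^j * (1/(real m + 2))^2"
      by (intro mult_right_mono power_mono) (auto simp: field_simps)
    finally show ?thesis by (simp add: G_def)
  qed
  have Gs: "G summable_on UNIV \<times> UNIV"
  proof -
    have geo: "(\<lambda>j. (1/2::real)^j * c) sums (2 * c)" for c
      using sums_mult2[OF geometric_sums[of "1/2::real"], of c] by simp
    have row: "((\<lambda>j. norm (G (m, j))) has_sum (2 * (1/(real m + 2))^2)) UNIV" for m
      by (rule norm_summable_imp_has_sum) (use geo[of "(1/(real m + 2))^2"] in \<open>auto simp: G_def sums_iff\<close>)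
    have "summable (\<lambda>n. inverse (real n ^ 2))" by (rule inverse_power_summable) simp
    then have "summable (\<lambda>n. inverse (real (n+2) ^ 2))"
      by (rule summable_ignore_initial_segment)
    then have "summable (\<lambda>m. 2 * (1/(real m + 2))^2)"
      by (intro summable_mult) (simp add: power_one_over add_ac inverse_eq_divide)
    then have s2: "(\<lambda>m. norm (infsum (\<lambda>j. norm (G (m, j))) UNIV)) summable_on UNIV"
      using infsumI[OF row] by (subst summable_on_UNIV_nonneg_real_iff) auto
    have "(\<lambda>x. norm (G x)) summable_on Sigma UNIV (\<lambda>_. UNIV)"
    proof (subst Infinite_Sum.abs_summable_on_Sigma_iff, intro conjI ballI)
      fix m :: nat
      show "(\<lambda>y. norm (G (m, y))) summable_on UNIV"
        using row[of m] unfolding summable_on_def by blast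
    next
      show "(\<lambda>x. norm (infsum (\<lambda>y. norm (G (x, y))) UNIV)) summable_on UNIV" by (rule s2)
    qed
    then show ?thesis by (rule abs_summable_summable)
  qed
  have Fs: "(\<lambda>(m,j). Fc m j) summable_on UNIV \<times> UNIV"
    by (rule abs_summable_summable, rule Infinite_Sum.abs_summable_on_comparison_test'[OF Gs]) (use bound in auto)
  define S where "S = infsum (\<lambda>(m,j). Fc m j) (UNIV \<times> UNIV)"
  have hs: "((\<lambda>(m,j). Fc m j) has_sum S) (UNIV \<times> UNIV)"
    unfolding S_def using Fs by (rule has_sum_infsum)
  have r: "(Fc m has_sum (\<Sum>j. Fc m j)) UNIV" for m
  proof -
    have "Fc m summable_on UNIV" by (rule summable_on_SigmaD1[OF Fs]) simp
    then have h: "(Fc m has_sum infsum (Fc m) UNIV) UNIV" by (rule has_sum_infsum)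
    then have "Fc m sums infsum (Fc m) UNIV" by (rule has_sum_imp_sums)
    then show ?thesis using h by (simp add: sums_iff)
  qed
  have rows: "((\<lambda>m. \<Sum>j. Fc m j) has_sum S) UNIV"
    by (rule has_sum_Sigma'[OF hs]) (use r in simp)
  have Fs': "(\<lambda>(j,m). Fc m j) summable_on UNIV \<times> UNIV"
    using Fs by (subst (asm) summable_on_swap) simp
  have hs': "((\<lambda>(j,m). Fc m j) has_sum S) (UNIV \<times> UNIV)"
    using hs by (subst (asm) has_sum_swap) simp
  have c: "((\<lambda>m. Fc m j) has_sum (\<Sum>m. Fc m j)) UNIV" for j
  proof -
    have "(\<lambda>m. Fc m j) summable_on UNIV" by (rule summable_on_SigmaD1[OF Fs']) simp
    then have h: "((\<lambda>m. Fc m j) has_sum infsum (\<lambda>m. Fc m j) UNIV) UNIV" by (rule has_sum_infsum)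
    then have "(\<lambda>m. Fc m j) sums infsum (\<lambda>m. Fc m j) UNIV" by (rule has_sum_imp_sums)
    then show ?thesis using h by (simp add: sums_iff)
  qed
  have cols: "((\<lambda>j. \<Sum>m. Fc m j) has_sum S) UNIV"
    by (rule has_sum_Sigma'[OF hs']) (use c in simp)
  have rowval: "(\<Sum>j. Fc m j) = tm (m+2) * (ln (1 + t/(real (m+2)+a)) - t/(real (m+2)+a))" for m
  proof -
    define y where "y = t/(real (m+2)+a)"
    have "\<bar>y\<bar> \<le> 1/2" using a t by (simp add: y_def abs_divide field_simps)
    from sums_mult[OF ln1p_series[OF this], of "tm (m+2)"]
    have "(\<lambda>j. tm (m+2) * ((-1)^(Suc j) / real (Suc (Suc j)) * y^(Suc (Suc j)))) sums (tm (m+2) * (ln (1 + y) - y))" .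
    moreover have "tm (m+2) * ((-1)^(Suc j) / real (Suc (Suc j)) * y^(Suc (Suc j))) = Fc m j" for j
      by (simp add: Fc_def y_def power_divide)
    ultimately show ?thesis by (simp add: sums_iff y_def)
  qed
  show ?thesis
    using has_sum_imp_sums[OF rows] has_sum_imp_sums[OF cols] rowval by auto
qed




theorem theorem5:
  fixes a x :: real
  assumes "a \<ge> 0" and "a - 1 \<le> x" and "x \<le> a + 1"
  shows "(\<forall>k::nat. k \<ge> 1 \<longrightarrow> summable (\<lambda>n. tm (n + 2) / (real (n + 2) + a) ^ k))
       \<and> (\<lambda>j. let k = Suc j in
              ((-1) ^ (k - 1) / real k)
              * (\<Sum>n. tm (n + 2) / (real (n + 2) + a) ^ k) * (x - a) ^ k)
           sums (ln (h x) - ln (h a))"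
proof -
  define t where "t = x - a"
  have t: "\<bar>t\<bar> \<le> 1" using assms by (simp add: t_def)
  have x1: "x \<ge> -1" and a1: "a \<ge> -1" using assms by auto
  have part1: "\<forall>k::nat. k \<ge> 1 \<longrightarrow> summable (\<lambda>n. tm (n + 2) / (real (n + 2) + a) ^ k)"
    using A_summable[OF assms(1)] by blast
  define A where "A k = (\<Sum>n. tm (n + 2) / (real (n + 2) + a) ^ k)" for k
  obtain S where S1: "(\<lambda>m. tm (m+2) * (ln (1 + t/(real (m+2)+a)) - t/(real (m+2)+a))) sums S"
    and S2: "(\<lambda>j. \<Sum>m. ((-1)^(Suc j) / real (Suc (Suc j))) * (tm (m+2) / (real (m+2)+a)^(Suc (Suc j))) * t^(Suc (Suc j))) sums S"
    using fubini_part[OF assms(1) t] by blast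
  have "(\<lambda>n. tm (n + 2) / (real (n + 2) + a) ^ 1) sums A 1"
    unfolding A_def by (rule summable_sums) (use part1 in auto)
  from sums_mult[OF this, of t]
  have A1: "(\<lambda>m. tm (m+2) * (t/(real (m+2)+a))) sums (t * A 1)" by (simp add: field_simps)
  have Es: "(\<lambda>m. tm (m+2) * (ln (real (m+2) + x) - ln (real (m+2) + a))) sums (t * A 1 + S)"
  proof -
    have "(\<lambda>m. tm (m+2) * (t/(real (m+2)+a)) + tm (m+2) * (ln (1 + t/(real (m+2)+a)) - t/(real (m+2)+a))) sums (t * A 1 + S)"
      by (rule sums_add[OF A1 S1])
    moreover have "tm (m+2) * (t/(real (m+2)+a)) + tm (m+2) * (ln (1 + t/(real (m+2)+a)) - t/(real (m+2)+a))
        = tm (m+2) * (ln (real (m+2) + x) - ln (real (m+2) + a))" for m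
    proof -
      define b where "b = real (m+2) + a"
      have b: "b > 0" using assms(1) by (simp add: b_def)
      have bx: "real (m+2) + x > 0" using x1 by simp
      have "1 + t / b = (real (m+2) + x) / b" using b by (simp add: b_def t_def field_simps)
      then have lnq: "ln (1 + t / b) = ln (real (m+2) + x) - ln b" using b bx by (simp add: ln_div)
      show ?thesis unfolding b_def[symmetric] lnq by (simp add: algebra_simps)
    qed
    ultimately show ?thesis by simp
  qed
  have L1: "(\<lambda>N. \<Sum>m<2*N. tm (m+2) * (ln (real (m+2) + x) - ln (real (m+2) + a))) \<longlonglongrightarrow> t * A 1 + S"
    using LIMSEQ_subseq_LIMSEQ[OF Es[unfolded sums_def], of "\<lambda>N. 2*N"]
    by (simp add: strict_mono_def o_def)
  have eqN: "(\<Sum>m<2*N. tm (m+2) * (ln (real (m+2) + x) - ln (real (m+2) + a))) = SN x N - SN a N" for N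
    by (simp add: SN_pair right_diff_distrib sum_subtractf)
  have L2: "(\<lambda>N. SN x N - SN a N) \<longlonglongrightarrow> ln (h x) - ln (h a)"
    by (intro tendsto_diff ln_h x1 a1)
  have D: "ln (h x) - ln (h a) = t * A 1 + S"
    using LIMSEQ_unique[OF L2] L1 eqN by simp
  define T where "T j = (let k = Suc j in ((-1) ^ (k - 1) / real k) * A k * (x - a) ^ k)" for j
  have TS: "T (Suc j) = (\<Sum>m. ((-1)^(Suc j) / real (Suc (Suc j))) * (tm (m+2) / (real (m+2)+a)^(Suc (Suc j))) * t^(Suc (Suc j)))" for j
  proof -
    have sm: "summable (\<lambda>m. tm (m+2) / (real (m+2)+a)^(Suc (Suc j)))" using part1[rule_format, of "Suc (Suc j)"] by simp
    have "(\<Sum>m. ((-1)^(Suc j) / real (Suc (Suc j))) * (tm (m+2) / (real (m+2)+a)^(Suc (Suc j))) * t^(Suc (Suc j)))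
        = ((-1)^(Suc j) / real (Suc (Suc j))) * A (Suc (Suc j)) * t^(Suc (Suc j))"
      unfolding A_def
      by (subst suminf_mult2[OF summable_mult[OF sm], symmetric], subst suminf_mult[OF sm]) (rule refl)
    then show ?thesis by (simp add: T_def t_def Let_def)
  qed
  have "(\<lambda>j. T (Suc j)) sums S" using S2 by (simp only: TS)
  then have "T sums (S + T 0)" by (subst (asm) sums_Suc_iff)
  moreover have "T 0 = t * A 1" by (simp add: T_def t_def)
  ultimately have "T sums (ln (h x) - ln (h a))" using D by (simp add: add_ac)
  then show ?thesis using part1 unfolding T_def A_def by simp
qed


end
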